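(* Let $Q=(q_n)_{n\ge1}$ be a basic sequence that is infinite in limit and grows slowly, i.e. there is a constant $M$ with $\omega_n\le M$ for all $n\ge1$. Then $\dim_H\Theta_Q=\dim_B\Theta_Q=0$ (in particular the box-counting dimension of $\Theta_Q$ exists).
   Context: A basic sequence is a sequence $Q=(q_n)_{n\ge1}$ of integers with $q_n\ge 2$; it is infinite in limit if $q_n\to\infty$. $\mathbb{N}$ denotes the positive integers. For each positive integer $j$ let $\nu_j=\min\{N : q_m\ge 2j^2 \text{ for all } m\ge N\}$. Define $l_1=\max(\nu_2-1,1)$ and, recursively for $i\ge 2$, $l_i=\max\big(\min\{k\in\mathbb{N} : l_1+2l_2+\cdots+(i-1)l_{i-1}+ik\ge \nu_{i+1}-1\},1\big)$. Put $L_i=\sum_{j=1}^i jl_j$ (with $L_0=0$). Let $S_Q=\{(a,b,c)\in\mathbb{N}^3 : b\le l_a,\ c\le a\}$ and $\phi_Q(a,b,c)=L_{a-1}+(b-1)a+c$; $\phi_Q$ is a bijection $S_Q\to\mathbb{N}$. A $Q$-special sequence is a family of integers $F=(F_{(a,b,c)})_{(a,b,c)\in S_Q}$ with $F_{(a,b,1)}=0$ for all $(a,b,1)\in S_Q$ and $\frac{F_{(a,b,c)}}{q_{\phi_Q(a,b,c)}}\in\left[\frac{c-1}{a}-\frac{1}{2a^2},\frac{c-1}{a}+\frac{1}{2a^2}\right]$ for $(a,b,c)\in S_Q$ with $c>1$. Let $\Gamma_Q$ be the set of $Q$-special sequences. For $F\in\Gamma_Q$ put $E_{F,n}=F_{\phi_Q^{-1}(n)}$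 and $x_F=\sum_{n=1}^\infty \frac{E_{F,n}}{q_1q_2\cdots q_n}$. Define $\Theta_Q=\{x_F : F\in\Gamma_Q\}\subseteq[0,1)$ and $\omega_n=\#\{E_{F,n} : F\in\Gamma_Q\}$. $\dim_H$ denotes Hausdorff dimension. For nonempty $J\subseteq[0,1)$, let $C_\delta(J)$ be the smallest number of sets of diameter at most $\delta$ covering $J$; the box-counting dimension is $\dim_B J=\lim_{\delta\to0}\frac{\log C_\delta(J)}{-\log\delta}$ when this limit exists. *)

theory Defs
  imports "HOL-Analysis.Analysis"
begin

section \<open>Basic sequences (q 0 is ignored; indices start at 1)\<close>

definition basic_seq :: "(nat \<Rightarrow> nat) \<Rightarrow> bool" where
  "basic_seq q \<longleftrightarrow> (\<forall>n\<ge>1. q n \<ge> 2)"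

definition infinite_in_limit :: "(nat \<Rightarrow> nat) \<Rightarrow> bool" where
  "infinite_in_limit q \<longleftrightarrow> filterlim q at_top sequentially"

definition nu :: "(nat \<Rightarrow> nat) \<Rightarrow> nat \<Rightarrow> nat" where
  "nu q j = (LEAST N. N \<ge> 1 \<and> (\<forall>m\<ge>N. q m \<ge> 2 * j^2))"

text \<open>lstep q i Lprev computes l_(i+1) from L_i = Lprev.\<close>
definition lstep :: "(nat \<Rightarrow> nat) \<Rightarrow> nat \<Rightarrow> nat \<Rightarrow> nat" where
  "lstep q i Lprev =
     (if i = 0 then max (nu q 2 - 1) 1
      else max (LEAST k. k \<ge> 1 \<and> Lprev + Suc i * k \<ge> nu q (i + 2) - 1) 1)"

fun Lq :: "(nat \<Rightarrow> nat) \<Rightarrow> nat \<Rightarrow> nat" where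
  "Lq q 0 = 0"
| "Lq q (Suc i) = Lq q i + Suc i * lstep q i (Lq q i)"

fun lq :: "(nat \<Rightarrow> nat) \<Rightarrow> nat \<Rightarrow> nat" where
  "lq q 0 = 0"
| "lq q (Suc i) = lstep q i (Lq q i)"

definition SQ :: "(nat \<Rightarrow> nat) \<Rightarrow> (nat \<times> nat \<times> nat) set" where
  "SQ q = {(a, b, c). 1 \<le> a \<and> 1 \<le> b \<and> 1 \<le> c \<and> b \<le> lq q a \<and> c \<le> a}"

definition phiQ :: "(nat \<Rightarrow> nat) \<Rightarrow> nat \<times> nat \<times> nat \<Rightarrow> nat" where
  "phiQ q t = (case t of (a, b, c) \<Rightarrow> Lq q (a - 1) + (b - 1) * a + c)"

text \<open>Q-special sequences: families of integers indexed by S_Q (values outside S_Q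
  are irrelevant and never used).\<close>
definition GammaQ :: "(nat \<Rightarrow> nat) \<Rightarrow> (nat \<times> nat \<times> nat \<Rightarrow> int) set" where
  "GammaQ q = {F. (\<forall>a b. (a, b, 1) \<in> SQ q \<longrightarrow> F (a, b, 1) = 0) \<and>
     (\<forall>a b c. (a, b, c) \<in> SQ q \<and> c > 1 \<longrightarrow>
        real_of_int (F (a, b, c)) / real (q (phiQ q (a, b, c)))
          \<in> {(real c - 1) / real a - 1 / (2 * real a ^ 2) ..
             (real c - 1) / real a + 1 / (2 * real a ^ 2)})}"

definition EF :: "(nat \<Rightarrow> nat) \<Rightarrow> (nat \<times> nat \<times> nat \<Rightarrow> int) \<Rightarrow> nat \<Rightarrow> int" where
  "EF q F n = F (inv_into (SQ q) (phiQ q) n)"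

definition xF :: "(nat \<Rightarrow> nat) \<Rightarrow> (nat \<times> nat \<times> nat \<Rightarrow> int) \<Rightarrow> real" where
  "xF q F = (\<Sum>n. real_of_int (EF q F (Suc n)) / (\<Prod>k = 1..Suc n. real (q k)))"

definition ThetaQ :: "(nat \<Rightarrow> nat) \<Rightarrow> real set" where
  "ThetaQ q = xF q ` GammaQ q"

definition omegaQ :: "(nat \<Rightarrow> nat) \<Rightarrow> nat \<Rightarrow> nat" where
  "omegaQ q n = card ((\<lambda>F. EF q F n) ` GammaQ q)"

text \<open>Contribution |U|^s of a covering set (with |empty|^s = 0 and the convention 0^0 = 1).\<close>
definition diam_pow :: "real \<Rightarrow> real set \<Rightarrow> real" where
  "diam_pow s U = (if U = {} then 0 else if s = 0 then 1 else diameter U powr s)"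

definition hausdorff_content :: "real \<Rightarrow> real \<Rightarrow> real set \<Rightarrow> ennreal" where
  "hausdorff_content s \<delta> A =
     (INF U \<in> {U :: nat \<Rightarrow> real set. A \<subseteq> (\<Union>n. U n) \<and>
                  (\<forall>n. bounded (U n) \<and> diameter (U n) \<le> \<delta>)}.
        (\<Sum>n. ennreal (diam_pow s (U n))))"

definition hausdorff_measure :: "real \<Rightarrow> real set \<Rightarrow> ennreal" where
  "hausdorff_measure s A = (SUP \<delta> \<in> {0<..}. hausdorff_content s \<delta> A)"

definition hausdorff_dim :: "real set \<Rightarrow> real" where
  "hausdorff_dim A = Inf {s. 0 \<le> s \<and> hausdorff_measure s A = 0}"

definition covering_number :: "real \<Rightarrow> real set \<Rightarrow> nat" where
  "covering_number \<delta> J = (LEAST n. \<exists>U :: nat \<Rightarrow> real set.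
      J \<subseteq> (\<Union>i<n. U i) \<and> (\<forall>i<n. bounded (U i) \<and> diameter (U i) \<le> \<delta>))"

definition has_box_dim :: "real set \<Rightarrow> real \<Rightarrow> bool" where
  "has_box_dim J d \<longleftrightarrow>
     ((\<lambda>\<delta>. ln (real (covering_number \<delta> J)) / - ln \<delta>) \<longlongrightarrow> d) (at_right 0)"

end

theory Submission
  imports Defs
begin


definition PP :: "(nat \<Rightarrow> nat) \<Rightarrow> nat \<Rightarrow> real" where
  "PP q n = (\<Prod>k=1..n. real (q k))"

definition SS :: "(nat \<Rightarrow> nat) \<Rightarrow> (nat \<times> nat \<times> nat \<Rightarrow> int) \<Rightarrow> nat \<Rightarrow> real" where
  "SS q F n = (\<Sum>k=1..n. real_of_int (EF q F k) / PP q k)"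

definition AA :: "(nat \<Rightarrow> nat) \<Rightarrow> nat \<Rightarrow> real set" where
  "AA q n = (\<lambda>F. SS q F n) ` GammaQ q"

lemma PP_Suc: "PP q (Suc n) = PP q n * real (q (Suc n))"
  unfolding PP_def by (simp add: prod.nat_ivl_Suc')

lemma PP_0[simp]: "PP q 0 = 1" unfolding PP_def by simp

lemma SS_Suc: "SS q F (Suc n) = SS q F n + real_of_int (EF q F (Suc n)) / PP q (Suc n)"
  unfolding SS_def by (simp add: sum.nat_ivl_Suc')

lemma SS_0[simp]: "SS q F 0 = 0" unfolding SS_def by simp

lemma PP_ge: assumes "basic_seq q" shows "PP q n \<ge> 2 ^ n"
proof (induction n)
  case 0 then show ?case by simp
next
  case (Suc n)
  have "q (Suc n) \<ge> 2" using assms unfolding basic_seq_def by auto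
  then have "real (q (Suc n)) \<ge> 2" by simp
  have "0 \<le> PP q n" by (rule order_trans[OF _ Suc.IH]) simp
  have "(2::real) ^ Suc n = 2 ^ n * 2" by simp
  also have "\<dots> \<le> PP q n * real (q (Suc n))"
    by (rule mult_mono) (use Suc \<open>real (q (Suc n)) \<ge> 2\<close> \<open>0 \<le> PP q n\<close> in auto)
  finally show ?case by (simp add: PP_Suc)
qed

lemma PP_pos: assumes "basic_seq q" shows "PP q n > 0"
  by (rule less_le_trans[OF _ PP_ge[OF assms]]) simp

lemma PP_mono: assumes "basic_seq q" "m \<le> n" shows "PP q m \<le> PP q n"
  using assms(2)
proof (induction n)
  case 0 then show ?case by simp
next
  case (Suc n)
  show ?case
  proof (cases "m = Suc n")
    case False
    then have "PP q m \<le> PP q n" using Suc by auto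
    moreover have "real (q (Suc n)) \<ge> 1" using assms(1) unfolding basic_seq_def
      by (metis One_nat_def Suc_le_mono le0 numeral_2_eq_2 of_nat_1 of_nat_le_iff order_trans)
    moreover have "PP q n > 0" using PP_pos[OF assms(1)] .
    ultimately have "PP q m \<le> PP q n * real (q (Suc n))"
      by (metis mult.right_neutral mult_left_mono order_trans less_imp_le)
    then show ?thesis by (simp add: PP_Suc)
  qed simp
qed

lemma lq_ge1: "lq q (Suc i) \<ge> 1"
  by (simp add: lstep_def)

lemma Lq_ge: "Lq q i \<ge> i"
proof (induction i)
  case (Suc i)
  have "Suc i * lstep q i (Lq q i) \<ge> 1" using lq_ge1[of q i] by simp
  then show ?case using Suc by simp
qed simp

lemma phi_surj_aux: "1 \<le> n \<Longrightarrow> n \<le> Lq q i \<Longrightarrow> n \<in> phiQ q ` SQ q"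
proof (induction i arbitrary: n)
  case 0 then show ?case by simp
next
  case (Suc i)
  show ?case
  proof (cases "n \<le> Lq q i")
    case True then show ?thesis using Suc by auto
  next
    case False
    define l where "l = lq q (Suc i)"
    have l1: "l \<ge> 1" unfolding l_def by (rule lq_ge1)
    have "n \<le> Lq q i + Suc i * l" using Suc.prems by (simp add: l_def)
    define r where "r = n - Lq q i - 1"
    have rl: "r < Suc i * l" using False \<open>n \<le> Lq q i + Suc i * l\<close> unfolding r_def by linarith
    define b where "b = r div Suc i + 1"
    define c where "c = r mod Suc i + 1"
    have "r div Suc i < l" using rl by (simp add: div_less_iff_less_mult mult.commute)
    then have bl: "b \<le> l" unfolding b_def by simp
    have cc: "c \<le> Suc i" unfolding c_def by simp
    have mem: "(Suc i, b, c) \<in> SQ q" unfolding SQ_def using bl cc l_def by (simp add: b_def c_def)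
    have "phiQ q (Suc i, b, c) = Lq q i + (r div Suc i) * Suc i + r mod Suc i + 1"
      unfolding phiQ_def b_def c_def by simp
    also have "\<dots> = n"
    proof -
      have "r div Suc i * Suc i + r mod Suc i = r" by (rule div_mult_mod_eq)
      then show ?thesis using False unfolding r_def by linarith
    qed
    finally show ?thesis using mem by force
  qed
qed

lemma phi_surj: "1 \<le> n \<Longrightarrow> n \<in> phiQ q ` SQ q"
  using phi_surj_aux[where n=n and q=q and i=n] Lq_ge[of n q] by simp



lemma frac_facts:
  fixes a c :: nat
  assumes "1 \<le> a" "2 \<le> c" "c \<le> a"
  shows "(real c - 1) / real a - 1 / (2 * real a ^ 2) > 0"
    and "(real c - 1) / real a + 1 / (2 * real a ^ 2) < 1"
proof -
  have a1: "real a \<ge> 1" using assms by simp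
  have k: "1 / (2 * real a ^ 2) < 1 / real a"
    using a1 by (simp add: divide_simps power2_eq_square)
  have "1 / real a \<le> (real c - 1) / real a" using assms a1 by (simp add: divide_right_mono)
  then show "(real c - 1) / real a - 1 / (2 * real a ^ 2) > 0" using k by linarith
  have "(real c - 1) / real a \<le> (real a - 1) / real a" using assms a1 by (simp add: divide_right_mono)
  also have "\<dots> = 1 - 1 / real a" using a1 by (simp add: field_simps)
  finally show "(real c - 1) / real a + 1 / (2 * real a ^ 2) < 1" using k by linarith
qed

lemma EF_bounds:
  assumes "basic_seq q" "F \<in> GammaQ q" "1 \<le> n"
  shows "0 \<le> EF q F n \<and> EF q F n \<le> int (q n) - 1"
proof -
  define x where "x = inv_into (SQ q) (phiQ q) n"
  have xs: "x \<in> SQ q" unfolding x_def using phi_surj[OF assms(3)] by (rule inv_into_into)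
  have xp: "phiQ q x = n" unfolding x_def using phi_surj[OF assms(3)] by (rule f_inv_into_f)
  obtain a b c where x: "x = (a, b, c)" by (cases x) auto
  have abc: "1 \<le> a" "1 \<le> b" "1 \<le> c" "b \<le> lq q a" "c \<le> a" using xs unfolding x SQ_def by auto
  have qn: "q n \<ge> 2" using assms(1,3) unfolding basic_seq_def by auto
  have E: "EF q F n = F x" unfolding EF_def x_def ..
  show ?thesis
  proof (cases "c = 1")
    case True
    then have "F x = 0" using assms(2) xs unfolding GammaQ_def x by auto
    then show ?thesis using E qn by simp
  next
    case False
    then have c2: "c \<ge> 2" using abc by simp
    have "real_of_int (F x) / real (q (phiQ q (a, b, c)))
          \<in> {(real c - 1) / real a - 1 / (2 * real a ^ 2) ..
             (real c - 1) / real a + 1 / (2 * real a ^ 2)}"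
      using assms(2) xs c2 unfolding GammaQ_def x by auto
    then have h: "real_of_int (F x) / real (q n) > 0" "real_of_int (F x) / real (q n) < 1"
      using frac_facts[OF abc(1) c2 abc(5)] xp x by auto
    have Q: "real (q n) > 0" using qn by simp
    from h(1) Q have "real_of_int (F x) > 0" by (simp add: zero_less_divide_iff)
    moreover from h(2) Q have "real_of_int (F x) < real (q n)" by (simp add: divide_less_eq)
    ultimately show ?thesis using E by simp
  qed
qed



lemma term_bounds:
  assumes "basic_seq q" "F \<in> GammaQ q"
  shows "0 \<le> real_of_int (EF q F (Suc m)) / PP q (Suc m)"
    and "real_of_int (EF q F (Suc m)) / PP q (Suc m) \<le> 1 / PP q m - 1 / PP q (Suc m)"
proof -
  have b: "0 \<le> EF q F (Suc m)" "EF q F (Suc m) \<le> int (q (Suc m)) - 1"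
    using EF_bounds[OF assms, of "Suc m"] by auto
  have P: "PP q m > 0" "PP q (Suc m) > 0" using PP_pos[OF assms(1)] by auto
  show "0 \<le> real_of_int (EF q F (Suc m)) / PP q (Suc m)" using b P by simp
  have "real_of_int (EF q F (Suc m)) \<le> real (q (Suc m)) - 1" using b
    by (metis of_int_diff of_int_le_iff of_int_of_nat_eq of_int_1)
  then have "real_of_int (EF q F (Suc m)) / PP q (Suc m) \<le> (real (q (Suc m)) - 1) / PP q (Suc m)"
    using P by (simp add: divide_right_mono)
  also have "\<dots> = 1 / PP q m - 1 / PP q (Suc m)"
  proof -
    have "real (q (Suc m)) > 0" using assms(1) unfolding basic_seq_def
      by (metis Suc_le_eq le_add1 less_le_trans of_nat_0_less_iff plus_1_eq_Suc zero_less_numeral)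
    then show ?thesis using P by (simp add: PP_Suc field_simps)
  qed
  finally show "real_of_int (EF q F (Suc m)) / PP q (Suc m) \<le> 1 / PP q m - 1 / PP q (Suc m)" .
qed

lemma SS_tail:
  assumes "basic_seq q" "F \<in> GammaQ q" "n \<le> m"
  shows "SS q F n \<le> SS q F m \<and> SS q F m \<le> SS q F n + 1 / PP q n - 1 / PP q m"
  using assms(3)
proof (induction m rule: dec_induct)
  case base then show ?case by simp
next
  case (step m)
  show ?case using step.IH term_bounds[OF assms(1,2), of m] by (simp add: SS_Suc)
qed

lemma partial_SS: "(\<Sum>i<m. real_of_int (EF q F (Suc i)) / (\<Prod>k = 1..Suc i. real (q k))) = SS q F m"
  by (induction m) (simp_all add: SS_Suc PP_def)

lemma xF_bounds:
  assumes "basic_seq q" "F \<in> GammaQ q"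
  shows "SS q F n \<le> xF q F \<and> xF q F \<le> SS q F n + 1 / PP q n"
proof -
  define f where "f i = real_of_int (EF q F (Suc i)) / (\<Prod>k = 1..Suc i. real (q k))" for i
  have f0: "0 \<le> f i" for i using term_bounds(1)[OF assms, of i] unfolding f_def PP_def .
  have ps: "sum f {..<m} = SS q F m" for m unfolding f_def by (rule partial_SS)
  have P: "\<And>m. PP q m > 0" using PP_pos[OF assms(1)] by auto
  have "sum f {..<m} \<le> 1" for m
  proof -
    have "SS q F m \<le> 1 - 1 / PP q m" using SS_tail[OF assms, of 0 m] by simp
    moreover have "1 / PP q m > 0" using P[of m] by simp
    ultimately have "SS q F m \<le> 1" by linarith
    then show ?thesis using ps by simp
  qed
  then have sf: "summable f" using f0 by (intro summableI_nonneg_bounded) auto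
  have lim: "(\<lambda>m. SS q F m) \<longlonglongrightarrow> xF q F"
    using summable_LIMSEQ[OF sf] unfolding ps xF_def f_def[symmetric] .
  have "SS q F n \<le> xF q F"
    by (rule LIMSEQ_le_const[OF lim]) (use SS_tail[OF assms] in blast)
  moreover have "xF q F \<le> SS q F n + 1 / PP q n"
  proof (rule LIMSEQ_le_const2[OF lim], intro exI allI impI)
    fix m assume "n \<le> m"
    then show "SS q F m \<le> SS q F n + 1 / PP q n" using SS_tail[OF assms \<open>n \<le> m\<close>] P[of m]
      by (smt (verit) divide_pos_pos)
  qed
  ultimately show ?thesis by simp
qed



lemma V_finite:
  assumes "basic_seq q" "1 \<le> n"
  shows "finite ((\<lambda>F. EF q F n) ` GammaQ q)"
proof (rule finite_subset)
  show "(\<lambda>F. EF q F n) ` GammaQ q \<subseteq> {0..int (q n) - 1}"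
    using EF_bounds[OF assms(1) _ assms(2)] by auto
qed simp

lemma AA_card:
  assumes "basic_seq q" "1 \<le> M" "\<forall>n\<ge>1. omegaQ q n \<le> M"
  shows "finite (AA q n) \<and> card (AA q n) \<le> M ^ n"
proof (induction n)
  case 0
  have "AA q 0 \<subseteq> {0}" unfolding AA_def by auto
  moreover have "card (AA q 0) \<le> card {0::real}" by (rule card_mono) (use calculation in auto)
  ultimately show ?case using finite_subset by auto
next
  case (Suc n)
  define V where "V = (\<lambda>F. EF q F (Suc n)) ` GammaQ q"
  have fV: "finite V" unfolding V_def by (rule V_finite[OF assms(1)]) simp
  have cV: "card V \<le> M" using assms(3) unfolding V_def omegaQ_def by auto
  have sub: "AA q (Suc n) \<subseteq> (\<lambda>(x, e). x + real_of_int e / PP q (Suc n)) ` (AA q n \<times> V)"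
  proof
    fix y assume "y \<in> AA q (Suc n)"
    then obtain F where F: "F \<in> GammaQ q" "y = SS q F (Suc n)" unfolding AA_def by auto
    then have "(SS q F n, EF q F (Suc n)) \<in> AA q n \<times> V" unfolding AA_def V_def by auto
    then show "y \<in> (\<lambda>(x, e). x + real_of_int e / PP q (Suc n)) ` (AA q n \<times> V)"
      using F by (force simp: SS_Suc)
  qed
  have fin: "finite (AA q n \<times> V)" using Suc fV by simp
  have "card (AA q (Suc n)) \<le> card ((\<lambda>(x, e). x + real_of_int e / PP q (Suc n)) ` (AA q n \<times> V))"
    by (rule card_mono[OF finite_imageI[OF fin] sub])
  also have "\<dots> \<le> card (AA q n \<times> V)" by (rule card_image_le[OF fin])
  also have "\<dots> = card (AA q n) * card V" by (rule card_cartesian_product)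
  also have "\<dots> \<le> M ^ n * M" using Suc cV by (simp add: mult_mono)
  finally show ?case using finite_subset[OF sub finite_imageI[OF fin]] by (simp add: mult.commute)
qed

lemma cover:
  assumes "basic_seq q"
  shows "ThetaQ q \<subseteq> (\<Union>a\<in>AA q n. {a..a + 1 / PP q n})"
proof
  fix y assume "y \<in> ThetaQ q"
  then obtain F where F: "F \<in> GammaQ q" "y = xF q F" unfolding ThetaQ_def by auto
  then have "SS q F n \<in> AA q n" unfolding AA_def by auto
  moreover have "y \<in> {SS q F n..SS q F n + 1 / PP q n}" using xF_bounds[OF assms F(1), of n] F by simp
  ultimately show "y \<in> (\<Union>a\<in>AA q n. {a..a + 1 / PP q n})" by blast
qed

lemma growth:
  assumes "basic_seq q" "infinite_in_limit q" "(1::real) \<le> M" "0 < \<epsilon>"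
  shows "\<exists>N. \<forall>n\<ge>N. real (n + 1) * ln M \<le> \<epsilon> * ln (PP q n)"
proof -
  define L where "L = ln M"
  have L0: "0 \<le> L" unfolding L_def using assms(3) by simp
  define R where "R = exp (2 * L / \<epsilon>)"
  have lnR: "ln R = 2 * L / \<epsilon>" unfolding R_def by simp
  have "\<forall>Z. eventually (\<lambda>k. Z \<le> q k) sequentially"
    using assms(2) unfolding infinite_in_limit_def filterlim_at_top by blast
  then have "eventually (\<lambda>k. nat \<lceil>R\<rceil> \<le> q k) sequentially" by blast
  then obtain K0 where K0: "\<And>k. k \<ge> K0 \<Longrightarrow> nat \<lceil>R\<rceil> \<le> q k" unfolding eventually_sequentially by auto
  define K where "K = Suc K0"
  have K1: "1 \<le> K" unfolding K_def by simp
  have qR: "R \<le> real (q k)" if "k \<ge> K" for k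
  proof -
    have "nat \<lceil>R\<rceil> \<le> q k" using K0 that unfolding K_def by simp
    then show ?thesis by linarith
  qed
  have Rpos: "R > 0" unfolding R_def by simp
  have qpos: "real (q k) > 0" if "k \<ge> 1" for k
  proof -
    have "q k \<ge> 2" using assms(1) that unfolding basic_seq_def by blast
    then show ?thesis by simp
  qed
  show ?thesis
  proof (intro exI allI impI)
    fix n assume n: "2 * K \<le> n"
    have lnP: "ln (PP q n) = (\<Sum>k=1..n. ln (real (q k)))"
      unfolding PP_def using qpos by (subst ln_prod) (auto simp: less_imp_neq[symmetric])
    have "(\<Sum>k=K..n. ln (real (q k))) \<le> (\<Sum>k=1..n. ln (real (q k)))"
    proof (rule sum_mono2)
      show "{K..n} \<subseteq> {1..n}" using K1 by auto
      fix k assume "k \<in> {1..n} - {K..n}"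
      then have "q k \<ge> 2" using assms(1) unfolding basic_seq_def by auto
      then have "real (q k) \<ge> 1" by simp
      then show "0 \<le> ln (real (q k))" by simp
    qed simp
    moreover have "(\<Sum>k=K..n. ln R) \<le> (\<Sum>k=K..n. ln (real (q k)))"
    proof (rule sum_mono)
      fix k assume "k \<in> {K..n}"
      then have "R \<le> real (q k)" using qR by simp
      then show "ln R \<le> ln (real (q k))" using Rpos by (rule_tac ln_mono) auto
    qed
    moreover have "(\<Sum>k=K..n. ln R) = real (n + 1 - K) * ln R" by simp
    ultimately have A: "real (n + 1 - K) * (2 * L / \<epsilon>) \<le> ln (PP q n)" using lnP lnR by simp
    have "\<epsilon> * (real (n + 1 - K) * (2 * L / \<epsilon>)) = 2 * real (n + 1 - K) * L"
      using assms(4) by (simp add: field_simps)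
    moreover have "real (n + 1) \<le> 2 * real (n + 1 - K)" using n by (simp add: of_nat_diff)
    then have "real (n + 1) * L \<le> 2 * real (n + 1 - K) * L" using L0 by (simp add: mult_right_mono)
    ultimately have "real (n + 1) * L \<le> \<epsilon> * ln (PP q n)"
      using mult_left_mono[OF A less_imp_le[OF assms(4)]] by linarith
    then show "real (n + 1) * ln M \<le> \<epsilon> * ln (PP q n)" unfolding L_def .
  qed
qed



lemma lnPP_ge: assumes "basic_seq q" shows "real n * ln 2 \<le> ln (PP q n)"
proof -
  have "ln ((2::real) ^ n) \<le> ln (PP q n)" using PP_ge[OF assms, of n] by (intro ln_mono) auto
  then show ?thesis by (simp add: ln_realpow)
qed

lemma small_step:
  assumes "basic_seq q" "0 < \<delta>" "- ln \<delta> \<le> ln (PP q n)"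
  shows "1 / PP q n \<le> \<delta>"
proof -
  have P: "PP q n > 0" using PP_pos[OF assms(1)] .
  have "ln (1 / \<delta>) \<le> ln (PP q n)" using assms(2,3) by (simp add: ln_div)
  then have "1 / \<delta> \<le> PP q n" using P assms(2) by simp
  then show ?thesis using P assms(2) by (simp add: field_simps)
qed

lemma cover_list:
  assumes "basic_seq q" "finite (AA q n)"
  defines "xs \<equiv> sorted_list_of_set (AA q n)"
  shows "ThetaQ q \<subseteq> (\<Union>i<length xs. {xs ! i .. xs ! i + 1 / PP q n})"
    and "length xs = card (AA q n)"
proof -
  have sx: "set xs = AA q n" unfolding xs_def using assms(2) by simp
  show "ThetaQ q \<subseteq> (\<Union>i<length xs. {xs ! i .. xs ! i + 1 / PP q n})"
  proof
    fix y assume "y \<in> ThetaQ q"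
    then obtain a where a: "a \<in> AA q n" "y \<in> {a..a + 1 / PP q n}" using cover[OF assms(1)] by blast
    then obtain i where "i < length xs" "xs ! i = a" using sx by (metis in_set_conv_nth)
    then show "y \<in> (\<Union>i<length xs. {xs ! i .. xs ! i + 1 / PP q n})" using a by blast
  qed
  show "length xs = card (AA q n)" unfolding xs_def by simp
qed

lemma diam_int: assumes "0 \<le> d" shows "bounded {a..a+d::real}" "diameter {a..a+d} \<le> d" "0 \<le> diameter {a..a+d}"
proof -
  show "bounded {a..a+d::real}" by simp
  show "diameter {a..a+d} \<le> d" by (rule diameter_le) (use assms in \<open>auto simp: abs_le_iff\<close>)
  show "0 \<le> diameter {a..a+d}" by (rule diameter_ge_0) simp
qed

lemma cov_bound:
  assumes "basic_seq q" "finite (AA q n)" "1 / PP q n \<le> \<delta>"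
  shows "covering_number \<delta> (ThetaQ q) \<le> card (AA q n)"
proof -
  define xs where "xs = sorted_list_of_set (AA q n)"
  define d where "d = 1 / PP q n"
  have d0: "0 \<le> d" unfolding d_def using PP_pos[OF assms(1), of n] by simp
  define U where "U i = {xs ! i .. xs ! i + d}" for i
  have "ThetaQ q \<subseteq> (\<Union>i<length xs. U i) \<and> (\<forall>i<length xs. bounded (U i) \<and> diameter (U i) \<le> \<delta>)"
    using cover_list(1)[OF assms(1,2)] diam_int[OF d0] assms(3)
    unfolding U_def xs_def d_def by (fastforce intro: order_trans)
  then have "covering_number \<delta> (ThetaQ q) \<le> length xs"
    unfolding covering_number_def by (intro Least_le) blast
  then show ?thesis using cover_list(2)[OF assms(1,2)] unfolding xs_def by simp
qed

lemma hc_bound: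
  assumes "basic_seq q" "finite (AA q n)" "1 / PP q n \<le> \<delta>" "0 < s"
  shows "hausdorff_content s \<delta> (ThetaQ q) \<le> ennreal (real (card (AA q n)) * (1 / PP q n) powr s)"
proof -
  define xs where "xs = sorted_list_of_set (AA q n)"
  define d where "d = 1 / PP q n"
  have d0: "0 \<le> d" unfolding d_def using PP_pos[OF assms(1), of n] by simp
  define U where "U i = (if i < length xs then {xs ! i .. xs ! i + d} else {})" for i
  have "ThetaQ q \<subseteq> (\<Union>i. U i)"
    using cover_list(1)[OF assms(1,2)] unfolding U_def xs_def d_def by force
  moreover have "\<forall>i. bounded (U i) \<and> diameter (U i) \<le> \<delta>"
  proof -
    have "0 \<le> \<delta>" using d0 assms(3) unfolding d_def by linarith
    moreover have "diameter {xs ! i .. xs ! i + d} \<le> \<delta>" for i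
      using diam_int(2)[OF d0] assms(3) unfolding d_def by (rule order_trans)
    ultimately show ?thesis using diam_int(1)[OF d0] unfolding U_def by auto
  qed
  ultimately have "hausdorff_content s \<delta> (ThetaQ q) \<le> (\<Sum>i. ennreal (diam_pow s (U i)))"
    unfolding hausdorff_content_def by (intro INF_lower) blast
  also have "(\<Sum>i. ennreal (diam_pow s (U i))) = (\<Sum>i<length xs. ennreal (diam_pow s (U i)))"
    by (rule suminf_finite) (auto simp: U_def diam_pow_def)
  also have "\<dots> = ennreal (\<Sum>i<length xs. diam_pow s (U i))"
    by (rule sum_ennreal) (auto simp: diam_pow_def)
  also have "\<dots> \<le> ennreal (\<Sum>i<length xs. d powr s)"
  proof (rule ennreal_leI, rule sum_mono)
    fix i assume i: "i \<in> {..<length xs}"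
    have "U i \<noteq> {}" using i d0 unfolding U_def by auto
    then have "diam_pow s (U i) = diameter (U i) powr s" using assms(4) unfolding diam_pow_def by simp
    also have "\<dots> \<le> d powr s" using i diam_int[OF d0] assms(4) unfolding U_def
      by (auto intro: powr_mono2)
    finally show "diam_pow s (U i) \<le> d powr s" .
  qed
  also have "\<dots> = ennreal (real (card (AA q n)) * (1 / PP q n) powr s)"
    using cover_list(2)[OF assms(1,2)] unfolding xs_def d_def by simp
  finally show ?thesis .
qed



lemma exp_bound:
  assumes "basic_seq q" "1 \<le> M" "0 < s" "0 < e"
    and N: "real (n + 1) * ln M \<le> (s / 2) * ln (PP q n)"
    and n2: "- ln e / ((s / 2) * ln 2) \<le> real n"
  shows "M ^ n * (1 / PP q n) powr s \<le> e"
proof -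
  define LP where "LP = ln (PP q n)"
  have P: "PP q n > 0" using PP_pos[OF assms(1)] .
  have Mn: "M ^ n = exp (real n * ln M)" using assms(2) by (simp add: exp_of_nat_mult)
  have Ps: "(1 / PP q n) powr s = exp (- s * LP)" using P unfolding LP_def powr_def
    by (simp add: ln_div)
  have l2: "0 < ln (2::real)" by simp
  have "real n * ln M \<le> real (n + 1) * ln M" using assms(2) by (simp add: mult_right_mono)
  then have a: "real n * ln M \<le> (s / 2) * LP" using N unfolding LP_def by linarith
  have b: "real n * ln 2 \<le> LP" unfolding LP_def by (rule lnPP_ge[OF assms(1)])
  have c0: "0 < (s / 2) * ln 2" using l2 assms(3) by simp
  have "- ln e \<le> real n * ((s / 2) * ln 2)" using n2 by (simp only: pos_divide_le_eq[OF c0])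
  moreover have "real n * ((s / 2) * ln 2) \<le> (s / 2) * LP"
    using mult_left_mono[OF b, of "s/2"] assms(3) by (simp add: mult_ac)
  ultimately have "real n * ln M + - s * LP \<le> ln e" using a by linarith
  then have "exp (real n * ln M + - s * LP) \<le> exp (ln e)" by simp
  moreover have "M ^ n * (1 / PP q n) powr s = exp (real n * ln M + - s * LP)"
    by (simp only: Mn Ps exp_add)
  ultimately show ?thesis using assms(4) by simp
qed

lemma content_zero:
  assumes "basic_seq q" "infinite_in_limit q" "1 \<le> M" "\<And>n. finite (AA q n) \<and> card (AA q n) \<le> M ^ n"
    and "0 < s" "0 < \<delta>"
  shows "hausdorff_content s \<delta> (ThetaQ q) = 0"
proof -
  have M1: "(1::real) \<le> real M" using assms(3) by simp
  have ee: "hausdorff_content s \<delta> (ThetaQ q) \<le> 0 + ennreal e" if e: "0 < e" for e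
  proof -
    obtain N where N: "\<And>n. n \<ge> N \<Longrightarrow> real (n + 1) * ln (real M) \<le> (s / 2) * ln (PP q n)"
      using growth[OF assms(1,2) M1, of "s/2"] assms(5) by auto
    obtain n1 where n1: "- ln \<delta> / ln 2 \<le> real n1" using real_arch_simple by blast
    obtain n2 where n2: "- ln e / ((s / 2) * ln 2) \<le> real n2" using real_arch_simple by blast
    define n where "n = max N (max n1 n2)"
    have l2: "0 < ln (2::real)" by simp
    have "- ln \<delta> \<le> real n1 * ln 2" using n1 by (simp only: pos_divide_le_eq[OF l2])
    also have "\<dots> \<le> real n * ln 2" unfolding n_def using l2 by (intro mult_right_mono) auto
    also have "\<dots> \<le> ln (PP q n)" by (rule lnPP_ge[OF assms(1)])
    finally have d: "1 / PP q n \<le> \<delta>" by (rule small_step[OF assms(1,6)])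
    have fin: "finite (AA q n)" using assms(4) by blast
    have c: "real (card (AA q n)) \<le> real M ^ n" using assms(4)[of n]
      by (simp only: of_nat_power[symmetric] of_nat_le_iff)
    have "real (card (AA q n)) * (1 / PP q n) powr s \<le> real M ^ n * (1 / PP q n) powr s"
      using c by (rule mult_right_mono) simp
    also have "\<dots> \<le> e"
    proof (rule exp_bound[OF assms(1) M1 assms(5) e])
      show "real (n + 1) * ln (real M) \<le> s / 2 * ln (PP q n)" using N unfolding n_def by simp
      show "- ln e / (s / 2 * ln 2) \<le> real n" using n2 unfolding n_def by linarith
    qed
    finally have "real (card (AA q n)) * (1 / PP q n) powr s \<le> e" .
    then have "ennreal (real (card (AA q n)) * (1 / PP q n) powr s) \<le> ennreal e" by (rule ennreal_leI)
    then show ?thesis using hc_bound[OF assms(1) fin d assms(5)] by simp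
  qed
  have "hausdorff_content s \<delta> (ThetaQ q) \<le> 0" by (rule ennreal_le_epsilon) (rule ee)
  then show ?thesis by simp
qed



theorem mainTheorem6:
  fixes q :: "nat \<Rightarrow> nat"
  assumes "basic_seq q"
    and "infinite_in_limit q"
    and "\<exists>M::nat. \<forall>n\<ge>1. omegaQ q n \<le> M"
  shows "hausdorff_dim (ThetaQ q) = 0 \<and> has_box_dim (ThetaQ q) 0"
proof -
  obtain M0 :: nat where M0: "\<forall>n\<ge>1. omegaQ q n \<le> M0" using assms(3) by blast
  define M where "M = max M0 1"
  have M1: "1 \<le> M" unfolding M_def by simp
  have hM: "\<forall>n\<ge>1. omegaQ q n \<le> M" using M0 unfolding M_def by (auto intro: le_trans)
  have AAc: "\<And>n. finite (AA q n) \<and> card (AA q n) \<le> M ^ n" using AA_card[OF assms(1) M1 hM] .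
  have Mr: "(1::real) \<le> real M" using M1 by simp
  have lnM: "0 \<le> ln (real M)" using Mr by simp
  have H0: "hausdorff_measure s (ThetaQ q) = 0" if s: "0 < s" for s
  proof -
    have "\<And>\<delta>. \<delta> \<in> {0<..} \<Longrightarrow> hausdorff_content s \<delta> (ThetaQ q) = 0"
      using content_zero[OF assms(1,2) M1 AAc s] by simp
    then show ?thesis unfolding hausdorff_measure_def by simp
  qed
  define S where "S = {s. 0 \<le> s \<and> hausdorff_measure s (ThetaQ q) = 0}"
  have inS: "s \<in> S" if "0 < s" for s using H0[OF that] that unfolding S_def by simp
  have bS: "bdd_below S" unfolding S_def by (rule bdd_belowI[of _ 0]) auto
  have g: "0 \<le> Inf S"
  proof (rule cInf_greatest)
    show "S \<noteq> {}" using inS[of 1] by auto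
  qed (auto simp: S_def)
  have l: "Inf S \<le> e" if "0 < e" for e using inS[OF that] bS by (rule cInf_lower)
  have dim: "hausdorff_dim (ThetaQ q) = 0"
  proof -
    have "Inf S \<le> 0"
    proof (rule ccontr)
      assume "\<not> Inf S \<le> 0"
      then have "Inf S \<le> Inf S / 2" using l[of "Inf S / 2"] by simp
      then show False using \<open>\<not> Inf S \<le> 0\<close> by simp
    qed
    then show ?thesis using g unfolding hausdorff_dim_def S_def[symmetric] by simp
  qed
  have box: "has_box_dim (ThetaQ q) 0"
    unfolding has_box_dim_def tendsto_iff eventually_at_right_field
  proof (intro allI impI)
    fix e :: real assume e: "0 < e"
    obtain N where N: "\<And>n. n \<ge> N \<Longrightarrow> real (n + 1) * ln (real M) \<le> (e / 2) * ln (PP q n)"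
      using growth[OF assms(1,2) Mr, of "e/2"] e by auto
    define b where "b = min (1/2) (1 / PP q N)"
    have PN: "PP q N > 0" using PP_pos[OF assms(1)] .
    have b0: "b > 0" unfolding b_def using PN by simp
    show "\<exists>b>0. \<forall>y>0. y < b \<longrightarrow>
        dist (ln (real (covering_number y (ThetaQ q))) / - ln y) 0 < e"
    proof (intro exI[of _ b] conjI allI impI b0)
      fix \<delta> :: real assume d0: "0 < \<delta>" and db: "\<delta> < b"
      have d1: "\<delta> < 1" using db unfolding b_def by simp
      have ex: "\<exists>n. 1 / PP q n \<le> \<delta>"
      proof -
        obtain n1 where n1: "- ln \<delta> / ln 2 \<le> real n1" using real_arch_simple by blast
        have l2: "0 < ln (2::real)" by simp
        have "- ln \<delta> \<le> real n1 * ln 2" using n1 by (simp only: pos_divide_le_eq[OF l2])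
        also have "\<dots> \<le> ln (PP q n1)" by (rule lnPP_ge[OF assms(1)])
        finally show ?thesis using small_step[OF assms(1) d0] by blast
      qed
      define n where "n = (LEAST n. 1 / PP q n \<le> \<delta>)"
      have nd: "1 / PP q n \<le> \<delta>" unfolding n_def using ex by (rule LeastI_ex)
      have Nn: "N < n"
      proof (rule ccontr)
        assume "\<not> N < n"
        then have "PP q n \<le> PP q N" using PP_mono[OF assms(1)] by simp
        then have "1 / PP q N \<le> 1 / PP q n" using PP_pos[OF assms(1), of n]
          by (simp add: frac_le)
        then show False using nd db unfolding b_def by linarith
      qed
      define m where "m = n - 1"
      have nm: "n = Suc m" and Nm: "N \<le> m" using Nn unfolding m_def by auto
      have "\<not> 1 / PP q m \<le> \<delta>" unfolding n_def[symmetric] m_def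
        by (rule not_less_Least) (use Nn n_def in simp)
      then have "\<delta> < 1 / PP q m" by simp
      then have "\<delta> * PP q m < 1" using PP_pos[OF assms(1), of m] by (simp add: field_simps)
      then have "PP q m < 1 / \<delta>" using d0 by (simp add: field_simps)
      then have "ln (PP q m) < ln (1 / \<delta>)" using PP_pos[OF assms(1), of m] d0
        by (subst ln_less_cancel_iff) auto
      then have lm: "ln (PP q m) < - ln \<delta>" using d0 by (simp add: ln_div)
      define C where "C = covering_number \<delta> (ThetaQ q)"
      have CM: "C \<le> M ^ n" unfolding C_def
        using cov_bound[OF assms(1) _ nd] AAc[of n] by (blast intro: le_trans)
      have lnd: "0 < - ln \<delta>" using d0 d1 by simp
      have C0: "0 \<le> ln (real C)"
        by (cases "C = 0") auto
      have "ln (real C) \<le> real n * ln (real M)"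
      proof (cases "C = 0")
        case True then show ?thesis using lnM by simp
      next
        case False
        have "real C \<le> real M ^ n" using CM by (simp only: of_nat_power[symmetric] of_nat_le_iff)
        then have "ln (real C) \<le> ln (real M ^ n)" using False by (intro ln_mono) auto
        then show ?thesis by (simp add: ln_realpow)
      qed
      also have "\<dots> \<le> (e / 2) * ln (PP q m)" using N[OF Nm] nm by simp
      also have "\<dots> \<le> (e / 2) * (- ln \<delta>)" using lm e by (intro mult_left_mono) auto
      finally have h: "ln (real C) \<le> (e / 2) * (- ln \<delta>)" .
      have "ln (real C) / - ln \<delta> \<le> e / 2" using h by (simp only: pos_divide_le_eq[OF lnd])
      moreover have nn: "0 \<le> ln (real C) / - ln \<delta>" using C0 lnd by (rule divide_nonneg_pos)
      moreover have "dist (ln (real C) / - ln \<delta>) 0 = ln (real C) / - ln \<delta>"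
        using nn by (simp only: dist_real_def diff_zero abs_of_nonneg)
      ultimately show "dist (ln (real (covering_number \<delta> (ThetaQ q))) / - ln \<delta>) 0 < e"
        using e unfolding C_def[symmetric] by linarith
    qed
  qed
  show ?thesis using dim box by simp
qed

end
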